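(* There exists a constant $C$, independent of $h$, of the interface element and of the interface location, such that for every interface element $T\in\mathcal T_h^i$, every $p\in\mathbb Q_1$ and every point $X_0\in\tau_{\omega_T}$, $$|p(X_0)|\le C h^{-1}\|p\|_{L^2(\tau_{\omega_T})}.$$
   Context: $\mathbb Q_1$ is the space of trilinear polynomials. $\Gamma$ is a closed $C^2$ surface separating a bounded domain $\Omega\subset\mathbb R^3$ (a union of finitely many rectangular parallelepipeds) into $\Omega^\pm$, with reach $r_\Gamma$ (largest $r$ such that normal segments of length $2r$ centered at distinct points of $\Gamma$ are disjoint). $\mathcal T_h$ is a Cartesian mesh of $\Omega$ by cubes of edge length $h$ with $h<r_\Gamma/(3\sqrt3)$, $\Gamma$ meeting each mesh edge in at most one point and the boundary of each mesh face in at most two points, and no vertex on $\Gamma$. $\mathcal T_h^i$ is the set of elements meeting $\Gamma$; $\omega_T$ is the union of elements $T'$ with $\overline{T'}\cap\overline T\ne\emptyset$. For $T\in\mathcal T_h^i$, $\tau(T)$ is the plane through three points where $\Gamma$ meets edges of $T$, selected as: if $\Gamma$ cuts 3 faces, all three; if $\Gamma$ cuts 4 faces separating the endpoints of an edge $e$ from the other vertices, the three farthest from $e$; if the four points lie on four parallel edges, any three; if $\Gamma$ cuts 5 faces, the three on parallel edges; if $\Gamma$ cuts 6 faces, every other one of the six (on three mutually orthogonal edges). $\tau_{\omega_T}=\omega_T\cap\tau(T)$. *)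

theory Defs
  imports "HOL-Analysis.Analysis"
begin

definition trilinear :: "(real^3 \<Rightarrow> real) \<Rightarrow> bool" where
  "trilinear p \<longleftrightarrow> (\<exists>c :: nat \<Rightarrow> nat \<Rightarrow> nat \<Rightarrow> real. \<forall>x.
     p x = (\<Sum>i\<le>1. \<Sum>j\<le>1. \<Sum>k\<le>1. c i j k * (x$1)^i * (x$2)^j * (x$3)^k))"

definition C2_chart :: "(real^3) set \<Rightarrow> (real^3) set \<Rightarrow> (real^3 \<Rightarrow> real) \<Rightarrow> (real^3 \<Rightarrow> real^3) \<Rightarrow> bool" where
  "C2_chart \<Gamma> U \<phi> g \<longleftrightarrow> open U \<and>
     (\<exists>H :: real^3 \<Rightarrow> real^3^3.
        (\<forall>y\<in>U. (\<phi> has_derivative (\<lambda>v. g y \<bullet> v)) (at y)) \<and>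
        (\<forall>y\<in>U. (g has_derivative (\<lambda>v. H y *v v)) (at y)) \<and>
        continuous_on U H) \<and>
     (\<forall>y\<in>U. g y \<noteq> 0) \<and>
     \<Gamma> \<inter> U = {y\<in>U. \<phi> y = 0}"

definition closed_C2_surface :: "(real^3) set \<Rightarrow> bool" where
  "closed_C2_surface \<Gamma> \<longleftrightarrow> compact \<Gamma> \<and> \<Gamma> \<noteq> {} \<and>
     (\<forall>x\<in>\<Gamma>. \<exists>U \<phi> g. x \<in> U \<and> C2_chart \<Gamma> U \<phi> g)"

definition unit_normal :: "(real^3) set \<Rightarrow> real^3 \<Rightarrow> real^3 \<Rightarrow> bool" where
  "unit_normal \<Gamma> x n \<longleftrightarrow>
     (\<exists>U \<phi> g. x \<in> U \<and> C2_chart \<Gamma> U \<phi> g \<and> n = inverse (norm (g x)) *\<^sub>R g x)"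

definition normal_segments_disjoint :: "(real^3) set \<Rightarrow> real \<Rightarrow> bool" where
  "normal_segments_disjoint \<Gamma> r \<longleftrightarrow>
     (\<forall>x y n m. x \<in> \<Gamma> \<and> y \<in> \<Gamma> \<and> x \<noteq> y \<and> unit_normal \<Gamma> x n \<and> unit_normal \<Gamma> y m \<longrightarrow>
        closed_segment (x - r *\<^sub>R n) (x + r *\<^sub>R n) \<inter>
        closed_segment (y - r *\<^sub>R m) (y + r *\<^sub>R m) = {})"

definition reach :: "(real^3) set \<Rightarrow> real" where
  "reach \<Gamma> = Sup {r. 0 \<le> r \<and> normal_segments_disjoint \<Gamma> r}"

definition cartesian_mesh :: "(real^3) set \<Rightarrow> real \<Rightarrow> (real^3) set set \<Rightarrow> bool" where
  "cartesian_mesh \<Omega> h \<T> \<longleftrightarrow> 0 < h \<and> finite \<T> \<and>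
     (\<exists>a :: real^3. \<forall>T\<in>\<T>. \<exists>k :: int^3.
        T = cbox (a + h *\<^sub>R (\<chi> i. of_int (k$i))) (a + h *\<^sub>R (\<chi> i. of_int (k$i) + 1))) \<and>
     \<Union>\<T> = closure \<Omega>"

definition verts :: "(real^3) set \<Rightarrow> (real^3) set" where
  "verts T = {v. v extreme_point_of T}"

definition edges :: "(real^3) set \<Rightarrow> (real^3) set set" where
  "edges T = {E. E face_of T \<and> aff_dim E = 1}"

definition faces :: "(real^3) set \<Rightarrow> (real^3) set set" where
  "faces T = {F. F face_of T \<and> aff_dim F = 2}"

definition edge_parallel :: "(real^3) set \<Rightarrow> 3 \<Rightarrow> bool" where
  "edge_parallel E i \<longleftrightarrow> (\<exists>a b. E = closed_segment a b \<and> a \<noteq> b \<and> (\<forall>j. j \<noteq> i \<longrightarrow> a$j = b$j))"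

definition cut_pts :: "(real^3) set \<Rightarrow> (real^3) set \<Rightarrow> (real^3) set" where
  "cut_pts \<Gamma> T = \<Gamma> \<inter> \<Union>(edges T)"

definition n_cut_faces :: "(real^3) set \<Rightarrow> (real^3) set \<Rightarrow> nat" where
  "n_cut_faces \<Gamma> T = card {F\<in>faces T. \<Gamma> \<inter> rel_frontier F \<noteq> {}}"

text \<open>S is an admissible choice of the three points defining the plane tau(T).\<close>
definition tau_selection :: "(real^3) set \<Rightarrow> (real^3) set \<Rightarrow> (real^3) set \<Rightarrow> bool" where
  "tau_selection \<Gamma> T S \<longleftrightarrow> S \<subseteq> cut_pts \<Gamma> T \<and> card S = 3 \<and>
    ((n_cut_faces \<Gamma> T = 3 \<and> S = cut_pts \<Gamma> T)
   \<or> (n_cut_faces \<Gamma> T = 4 \<and>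
        (\<exists>e\<in>edges T. (\<forall>E\<in>edges T. (\<Gamma> \<inter> E \<noteq> {}) \<longleftrightarrow> (E \<noteq> e \<and> E \<inter> e \<noteq> {})) \<and>
           (\<forall>q\<in>S. \<forall>q'\<in>cut_pts \<Gamma> T - S. infdist q' e \<le> infdist q e)))
   \<or> (n_cut_faces \<Gamma> T = 4 \<and> (\<exists>i. \<forall>E\<in>edges T. \<Gamma> \<inter> E \<noteq> {} \<longrightarrow> edge_parallel E i))
   \<or> (n_cut_faces \<Gamma> T = 5 \<and> (\<exists>i. \<forall>q\<in>S. \<exists>E\<in>edges T. q \<in> E \<and> edge_parallel E i))
   \<or> (n_cut_faces \<Gamma> T = 6 \<and>
        (\<forall>i. \<exists>q\<in>S. \<exists>E\<in>edges T. q \<in> E \<and> edge_parallel E i) \<and>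
        (\<forall>q\<in>S. \<forall>q'\<in>S. q \<noteq> q' \<longrightarrow> \<not> (\<exists>F\<in>faces T. q \<in> F \<and> q' \<in> F))))"

definition omega :: "(real^3) set set \<Rightarrow> (real^3) set \<Rightarrow> (real^3) set" where
  "omega \<T> T = \<Union>{T'\<in>\<T>. T' \<inter> T \<noteq> {}}"

text \<open>L2 norm over a subset A of a plane, w.r.t. the planar (2D surface) measure,
  computed via the isometric parametrisation (s,t) |-> q + s u + t v.\<close>
definition plane_L2_norm :: "(real^3) set \<Rightarrow> (real^3 \<Rightarrow> real) \<Rightarrow> real^3 \<Rightarrow> real^3 \<Rightarrow> real^3 \<Rightarrow> real" where
  "plane_L2_norm A p q u v = sqrt (enn2real (\<integral>\<^sup>+ z. ennreal
      (indicator A (q + fst z *\<^sub>R u + snd z *\<^sub>R v) * (p (q + fst z *\<^sub>R u + snd z *\<^sub>R v))\<^sup>2)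
      \<partial>(lborel :: (real \<times> real) measure)))"

end

theory Submission
  imports Defs "HOL-Computational_Algebra.Polynomial"
begin


definition MK :: "real \<Rightarrow> real" where
  "MK K = 28 * (1 + (2*K+1)^2 + (6*K^2+6*K+1)^2 + (20*K^3+30*K^2+12*K+1)^2)"

definition HQ :: "real \<Rightarrow> real \<Rightarrow> real \<Rightarrow> real \<Rightarrow> real" where
  "HQ e0 e1 e2 e3 = e0^2 + e0*e1 + (e1^2 + 2*e0*e2)/3 + (2*e0*e3 + 2*e1*e2)/4
     + (e2^2 + 2*e1*e3)/5 + 2*e2*e3/6 + e3^2/7"

lemma sq4: "((a::real)+b+c+d)^2 \<le> 4*(a^2+b^2+c^2+d^2)"
proof -
  have "4*(a^2+b^2+c^2+d^2) - (a+b+c+d)^2 = (a-b)^2+(a-c)^2+(a-d)^2+(b-c)^2+(b-d)^2+(c-d)^2"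
    by (simp add: power2_eq_square algebra_simps)
  moreover have "(a-b)^2+(a-c)^2+(a-d)^2+(b-c)^2+(b-d)^2+(c-d)^2 \<ge> 0" by simp
  ultimately show ?thesis by linarith
qed

lemma aux7: "0\<le>(a::real) \<Longrightarrow> 0\<le>b \<Longrightarrow> 0\<le>c \<Longrightarrow> 0\<le>d \<Longrightarrow> x = a \<or> x = b \<or> x = c \<or> x = d \<Longrightarrow> x \<le> 7*(a+b/3+c/5+d/7)"
  by auto

lemma L0:
  fixes e0 e1 e2 e3 w K :: real
  assumes w: "\<bar>w\<bar> \<le> K"
  shows "(e0 + e1*w + e2*w^2 + e3*w^3)^2 \<le> MK K * HQ e0 e1 e2 e3"
proof -
  define c3 where "c3 = e3/20"
  define c2 where "c2 = (e2 + 30*c3)/6"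
  define c1 where "c1 = (e1 - 12*c3 + 6*c2)/2"
  define c0 where "c0 = e0 + c1 - c2 + c3"
  define P1 where "P1 = 2*w-1"
  define P2 where "P2 = 6*w^2-6*w+1"
  define P3 where "P3 = 20*w^3-30*w^2+12*w-1"
  have g: "e0 + e1*w + e2*w^2 + e3*w^3 = c0 + c1*P1 + c2*P2 + c3*P3"
    unfolding c0_def c1_def c2_def c3_def P1_def P2_def P3_def by (simp add: field_simps) 
  have hq: "HQ e0 e1 e2 e3 = c0^2 + c1^2/3 + c2^2/5 + c3^2/7"
    unfolding HQ_def c0_def c1_def c2_def c3_def by (simp add: field_simps power2_eq_square) 
  have K0: "0 \<le> K" using w by linarith
  have w2: "w^2 \<le> K^2" using w by (metis abs_le_square_iff abs_of_nonneg K0)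
  have w3: "\<bar>w\<bar>^3 \<le> K^3" using w by (simp add: power_mono)
  have aw2: "\<bar>w\<bar>^2 = w^2" by simp
  have b1: "\<bar>P1\<bar> \<le> 2*K+1" unfolding P1_def using w by linarith
  have ww: "0 \<le> w^2" by simp
  have w3a: "\<bar>w^3\<bar> = \<bar>w\<bar>^3" by (simp add: power_abs)
  have w3b: "w^3 \<le> \<bar>w\<bar>^3 \<and> -(\<bar>w\<bar>^3) \<le> w^3" using w3a by linarith
  have b2: "\<bar>P2\<bar> \<le> 6*K^2+6*K+1" unfolding P2_def using w w2 ww by linarith
  have b3: "\<bar>P3\<bar> \<le> 20*K^3+30*K^2+12*K+1" unfolding P3_def using w w2 w3 ww w3b by linarith
  have s1: "P1^2 \<le> (2*K+1)^2" using b1 by (metis abs_le_square_iff abs_of_nonneg abs_ge_zero order_trans)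
  have s2: "P2^2 \<le> (6*K^2+6*K+1)^2" using b2 by (metis abs_le_square_iff abs_of_nonneg abs_ge_zero order_trans)
  have s3: "P3^2 \<le> (20*K^3+30*K^2+12*K+1)^2" using b3 by (metis abs_le_square_iff abs_of_nonneg abs_ge_zero order_trans)
  let ?H = "HQ e0 e1 e2 e3"
  have H0: "0 \<le> ?H" unfolding hq by simp
  have c0b: "c0^2 \<le> 7*?H" unfolding hq by (rule aux7) simp_all
  have c1b: "c1^2 \<le> 7*?H" unfolding hq by (rule aux7) simp_all
  have c2b: "c2^2 \<le> 7*?H" unfolding hq by (rule aux7) simp_all
  have c3b: "c3^2 \<le> 7*?H" unfolding hq by (rule aux7) simp_all
  have "(c0 + c1*P1 + c2*P2 + c3*P3)^2 \<le> 4*(c0^2 + (c1*P1)^2 + (c2*P2)^2 + (c3*P3)^2)"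
    using sq4 by blast
  also have "... = 4*(c0^2 + c1^2*P1^2 + c2^2*P2^2 + c3^2*P3^2)" by (simp add: power_mult_distrib)
  also have "... \<le> 4*(7*?H + 7*?H*(2*K+1)^2 + 7*?H*(6*K^2+6*K+1)^2 + 7*?H*(20*K^3+30*K^2+12*K+1)^2)"
    using c0b c1b c2b c3b s1 s2 s3 H0
    by (intro mult_left_mono add_mono mult_mono) auto
  also have "... = MK K * ?H" unfolding MK_def by (simp add: algebra_simps)
  finally show ?thesis using g by simp
qed
lemma poly_cubic:
  fixes P :: "real poly"
  assumes "degree P \<le> 3"
  shows "poly P y = coeff P 0 + coeff P 1 * y + coeff P 2 * y^2 + coeff P 3 * y^3"
proof -
  have "poly P y = (\<Sum>i\<le>degree P. coeff P i * y ^ i)" by (rule poly_altdef)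
  also have "... = (\<Sum>i\<le>3. coeff P i * y ^ i)"
    by (rule sum.mono_neutral_left) (use assms in \<open>auto simp: coeff_eq_0\<close>)
  also have "... = coeff P 0 + coeff P 1 * y + coeff P 2 * y^2 + coeff P 3 * y^3"
    by (simp add: numeral_3_eq_3 numeral_2_eq_2 atMost_Suc)
  finally show ?thesis .
qed

definition Hpol :: "real \<Rightarrow> real \<Rightarrow> real \<Rightarrow> real \<Rightarrow> real \<Rightarrow> real" where
  "Hpol e0 e1 e2 e3 w = e0^2*w + e0*e1*w^2 + (e1^2 + 2*e0*e2)/3*w^3 + (2*e0*e3 + 2*e1*e2)/4*w^4
     + (e2^2 + 2*e1*e3)/5*w^5 + 2*e2*e3/6*w^6 + e3^2/7*w^7"

lemma Hpol_deriv: "((Hpol e0 e1 e2 e3) has_real_derivative (e0 + e1*w + e2*w^2 + e3*w^3)^2) (at w)"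
proof -
  have "((Hpol e0 e1 e2 e3) has_real_derivative
     e0^2 + e0*e1*(2*w) + (e1^2 + 2*e0*e2)/3*(3*w^2) + (2*e0*e3 + 2*e1*e2)/4*(4*w^3)
     + (e2^2 + 2*e1*e3)/5*(5*w^4) + 2*e2*e3/6*(6*w^5) + e3^2/7*(7*w^6)) (at w)"
    unfolding Hpol_def
    by (rule derivative_eq_intros refl | simp)+
  moreover have "e0^2 + e0*e1*(2*w) + (e1^2 + 2*e0*e2)/3*(3*w^2) + (2*e0*e3 + 2*e1*e2)/4*(4*w^3)
     + (e2^2 + 2*e1*e3)/5*(5*w^4) + 2*e2*e3/6*(6*w^5) + e3^2/7*(7*w^6) = (e0 + e1*w + e2*w^2 + e3*w^3)^2"
    by (simp add: power2_eq_square power_numeral_reduce field_simps)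
  ultimately show ?thesis by simp
qed

lemma L1:
  fixes P :: "real poly"
  assumes deg: "degree P \<le> 3" and a: "a > 0" and x: "\<bar>x - l\<bar> \<le> K * a"
  shows "\<exists>I. ((\<lambda>y. (poly P y)^2) has_integral I) {l..l+a} \<and> (poly P x)^2 \<le> MK K / a * I"
proof -
  define d0 where "d0 = coeff P 0"
  define d1 where "d1 = coeff P 1"
  define d2 where "d2 = coeff P 2"
  define d3 where "d3 = coeff P 3"
  have pP: "\<And>y. poly P y = d0 + d1*y + d2*y^2 + d3*y^3"
    using poly_cubic[OF deg] unfolding d0_def d1_def d2_def d3_def by blast
  define e0 where "e0 = d0 + d1*l + d2*l^2 + d3*l^3"
  define e1 where "e1 = a*(d1 + 2*d2*l + 3*d3*l^2)"
  define e2 where "e2 = a^2*(d2 + 3*d3*l)"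
  define e3 where "e3 = a^3*d3"
  define g where "g w = e0 + e1*w + e2*w^2 + e3*w^3" for w
  have pg: "poly P (l + a*w) = g w" for w
    unfolding pP g_def e0_def e1_def e2_def e3_def
    by (simp add: power2_eq_square power3_eq_cube algebra_simps)
  have pg2: "poly P y = g ((y-l)/a)" for y
    using pg[of "(y-l)/a"] a by simp
  define \<Phi> where "\<Phi> y = a * Hpol e0 e1 e2 e3 ((y-l)/a)" for y
  have der: "(\<Phi> has_real_derivative (poly P y)^2) (at y)" for y
  proof -
    have "((\<lambda>y. (y-l)/a) has_real_derivative 1/a) (at y)"
      using a by (auto intro!: derivative_eq_intros simp: field_simps)
    from DERIV_chain2[OF Hpol_deriv this]
    have "((\<lambda>y. Hpol e0 e1 e2 e3 ((y-l)/a)) has_real_derivative g ((y-l)/a) ^2 * (1/a)) (at y)"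
      unfolding g_def by simp
    from DERIV_cmult[OF this, of a] show ?thesis unfolding \<Phi>_def pg2 using a by simp
  qed
  have int: "((\<lambda>y. (poly P y)^2) has_integral (\<Phi> (l+a) - \<Phi> l)) {l..l+a}"
    by (rule fundamental_theorem_of_calculus) (use a der in \<open>auto simp: has_real_derivative_iff_has_vector_derivative[symmetric] intro: has_field_derivative_at_within\<close>)
  have val: "\<Phi> (l+a) - \<Phi> l = a * HQ e0 e1 e2 e3"
    unfolding \<Phi>_def Hpol_def HQ_def using a by simp
  have wx: "\<bar>(x-l)/a\<bar> \<le> K" using x a by (simp add: divide_le_eq abs_divide)
  have "(poly P x)^2 \<le> MK K * HQ e0 e1 e2 e3"
    unfolding pg2 g_def by (rule L0[OF wx])
  also have "... = MK K / a * (a * HQ e0 e1 e2 e3)" using a by simp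
  finally show ?thesis using int val by auto
qed

lemma MK_pos: "0 < MK K" unfolding MK_def by (simp add: add_pos_nonneg)

lemma L1n:
  fixes P :: "real poly"
  assumes deg: "degree P \<le> 3" and a: "a > 0" and x: "\<bar>x - l\<bar> \<le> K * a"
  shows "ennreal ((poly P x)^2) \<le> ennreal (MK K / a) * (\<integral>\<^sup>+ y. ennreal (indicator {l..l+a} y * (poly P y)^2) \<partial>lborel)"
proof -
  obtain I where I: "((\<lambda>y. (poly P y)^2) has_integral I) {l..l+a}" and le: "(poly P x)^2 \<le> MK K / a * I"
    using L1[OF assms] by blast
  have eq: "(\<integral>\<^sup>+ y. ennreal (indicator {l..l+a} y * (poly P y)^2) \<partial>lborel) = ennreal I"
    by (rule nn_integral_has_integral_lebesgue[OF _ I]) simp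
  have "ennreal ((poly P x)^2) \<le> ennreal (MK K / a * I)" using le by (rule ennreal_leI)
  also have "... = ennreal (MK K / a) * ennreal I"
    using MK_pos[of K] a by (intro ennreal_mult') simp
  finally show ?thesis unfolding eq .
qed

lemma tri_line:
  assumes "trilinear p"
  shows "\<exists>P. degree P \<le> 3 \<and> (\<forall>s. p (x0 + s *\<^sub>R d) = poly P s)"
proof -
  obtain c where c: "\<And>x. p x = (\<Sum>i\<le>1. \<Sum>j\<le>1. \<Sum>k\<le>1. c i j k * (x$1)^i * (x$2)^j * (x$3)^k)"
    using assms unfolding trilinear_def by blast
  define P where "P = (\<Sum>i\<le>1. \<Sum>j\<le>1. \<Sum>k\<le>1. [:c i j k:] * [:x0$1, d$1:]^i * [:x0$2, d$2:]^j * [:x0$3, d$3:]^k)"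
  have "poly P s = p (x0 + s *\<^sub>R d)" for s
    unfolding P_def c by (simp add: poly_sum algebra_simps)
  moreover have dt: "degree ([:c i j k:] * [:x0$1, d$1:]^i * [:x0$2, d$2:]^j * [:x0$3, d$3:]^k) \<le> 3"
    if ijk: "i \<le> 1" "j \<le> 1" "k \<le> 1" for i j k
  proof -
    have "degree ([:c i j k:] * [:x0$1, d$1:]^i * [:x0$2, d$2:]^j * [:x0$3, d$3:]^k)
       \<le> degree ([:c i j k:] * [:x0$1, d$1:]^i * [:x0$2, d$2:]^j) + degree ([:x0$3, d$3:]^k)"
      by (rule degree_mult_le)
    also have "... \<le> degree ([:c i j k:] * [:x0$1, d$1:]^i) + degree ([:x0$2, d$2:]^j) + degree ([:x0$3, d$3:]^k)"
      by (meson add_right_mono degree_mult_le order_trans)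
    also have "... \<le> degree ([:c i j k:]) + degree ([:x0$1, d$1:]^i) + degree ([:x0$2, d$2:]^j) + degree ([:x0$3, d$3:]^k)"
      by (meson add_right_mono degree_mult_le order_trans)
    also have "... \<le> 0 + 1*i + 1*j + 1*k"
      by (intro add_mono degree_power_le[THEN order_trans]) (auto intro: mult_right_mono)
    also have "... \<le> 3" using ijk by simp
    finally show ?thesis .
  qed
  have "degree P \<le> 3" unfolding P_def by (intro degree_sum_le finite_atMost dt) auto
  ultimately show ?thesis by auto
qed

lemma tri_cont:
  assumes "trilinear p" shows "continuous_on UNIV p"
proof -
  obtain c where c: "\<And>x. p x = (\<Sum>i\<le>1. \<Sum>j\<le>1. \<Sum>k\<le>1. c i j k * (x$1)^i * (x$2)^j * (x$3)^k)"
    using assms unfolding trilinear_def by blast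
  have "p = (\<lambda>x. \<Sum>i\<le>1. \<Sum>j\<le>1. \<Sum>k\<le>1. c i j k * (x$1)^i * (x$2)^j * (x$3)^k)"
    using c by auto
  moreover have "continuous_on UNIV (\<lambda>x::real^3. \<Sum>i\<le>1. \<Sum>j\<le>1. \<Sum>k\<le>1. c i j k * (x$1)^i * (x$2)^j * (x$3)^k)"
    by (intro continuous_intros)
  ultimately show ?thesis by simp
qed

lemma L2:
  fixes p :: "real^3 \<Rightarrow> real"
  assumes tri: "trilinear p" and a: "a > 0"
    and s0: "\<bar>s0 - ls\<bar> \<le> K * a" and t0: "\<bar>t0 - lt\<bar> \<le> K * a"
    and sub: "\<And>s t. s \<in> {ls..ls+a} \<Longrightarrow> t \<in> {lt..lt+a} \<Longrightarrow> q + s *\<^sub>R u + t *\<^sub>R v \<in> A"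
  shows "ennreal ((p (q + s0 *\<^sub>R u + t0 *\<^sub>R v))^2) \<le> ennreal (MK K / a) * ennreal (MK K / a) *
     (\<integral>\<^sup>+ z. ennreal (indicator A (q + fst z *\<^sub>R u + snd z *\<^sub>R v) * (p (q + fst z *\<^sub>R u + snd z *\<^sub>R v))^2) \<partial>lborel)"
proof -
  define F where "F s t = p (q + s *\<^sub>R u + t *\<^sub>R v)" for s t
  define c where "c = ennreal (MK K / a)"
  define Is where "Is = {ls..ls+a}"
  define It where "It = {lt..lt+a}"
  define g where "g z = ennreal (indicator (Is \<times> It) z * (F (fst z) (snd z))^2)" for z
  have Fs: "\<exists>P. degree P \<le> 3 \<and> (\<forall>s. F s t = poly P s)" for t
  proof -
    obtain P where "degree P \<le> 3" "\<forall>s. p ((q + t *\<^sub>R v) + s *\<^sub>R u) = poly P s"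
      using tri_line[OF tri] by blast
    thus ?thesis unfolding F_def by (metis add.assoc add.commute)
  qed
  have Ft: "\<exists>P. degree P \<le> 3 \<and> (\<forall>t. F s t = poly P t)" for s
  proof -
    obtain P where "degree P \<le> 3" "\<forall>t. p ((q + s *\<^sub>R u) + t *\<^sub>R v) = poly P t"
      using tri_line[OF tri] by blast
    thus ?thesis unfolding F_def by metis
  qed
  have contF: "continuous_on UNIV (\<lambda>z::real\<times>real. F (fst z) (snd z))"
    unfolding F_def
    by (rule continuous_on_compose2[OF tri_cont[OF tri]]) (auto intro!: continuous_intros)
  have meas: "g \<in> borel_measurable (lborel \<Otimes>\<^sub>M lborel)"
    unfolding lborel_prod g_def measurable_lborel2
    by (intro measurable_compose[OF _ measurable_ennreal] borel_measurable_times
        borel_measurable_indicator borel_measurable_power borel_measurable_continuous_onI contF)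
       (auto intro!: borel_closed closed_Times simp: Is_def It_def)
  have step1: "ennreal ((F s0 t0)^2) \<le> c * (\<integral>\<^sup>+ s. ennreal (indicator Is s * (F s t0)^2) \<partial>lborel)"
  proof -
    obtain P where P: "degree P \<le> 3" "\<forall>s. F s t0 = poly P s" using Fs by blast
    show ?thesis using L1n[OF P(1) a s0] unfolding c_def Is_def by (simp add: P(2))
  qed
  have step2: "ennreal (indicator Is s * (F s t0)^2) \<le> c * (\<integral>\<^sup>+ t. g (s,t) \<partial>lborel)" for s
  proof (cases "s \<in> Is")
    case True
    obtain P where P: "degree P \<le> 3" "\<forall>t. F s t = poly P t" using Ft by blast
    have "ennreal ((F s t0)^2) \<le> c * (\<integral>\<^sup>+ t. ennreal (indicator It t * (F s t)^2) \<partial>lborel)"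
      using L1n[OF P(1) a t0] unfolding c_def It_def by (simp add: P(2))
    moreover have "(\<lambda>t. g (s,t)) = (\<lambda>t. ennreal (indicator It t * (F s t)^2))"
      using True by (auto simp: g_def indicator_def)
    ultimately show ?thesis using True by simp
  next
    case False thus ?thesis by simp
  qed
  have "ennreal ((F s0 t0)^2) \<le> c * (\<integral>\<^sup>+ s. c * (\<integral>\<^sup>+ t. g (s,t) \<partial>lborel) \<partial>lborel)"
    using step1 step2 by (meson dual_order.trans mult_left_mono nn_integral_mono zero_le)
  also have "(\<integral>\<^sup>+ s. c * (\<integral>\<^sup>+ t. g (s,t) \<partial>lborel) \<partial>lborel) = c * (\<integral>\<^sup>+ s. (\<integral>\<^sup>+ t. g (s,t) \<partial>lborel) \<partial>lborel)"
    by (rule nn_integral_cmult) (rule lborel.borel_measurable_nn_integral_fst[OF meas])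
  also have "(\<integral>\<^sup>+ s. (\<integral>\<^sup>+ t. g (s,t) \<partial>lborel) \<partial>lborel) = integral\<^sup>N (lborel \<Otimes>\<^sub>M lborel) g"
    by (rule lborel.nn_integral_fst[OF meas])
  also have "... = integral\<^sup>N lborel g" by (simp add: lborel_prod)
  also have "... \<le> (\<integral>\<^sup>+ z. ennreal (indicator A (q + fst z *\<^sub>R u + snd z *\<^sub>R v) * (p (q + fst z *\<^sub>R u + snd z *\<^sub>R v))^2) \<partial>lborel)"
  proof (rule nn_integral_mono)
    fix z :: "real \<times> real"
    show "g z \<le> ennreal (indicator A (q + fst z *\<^sub>R u + snd z *\<^sub>R v) * (p (q + fst z *\<^sub>R u + snd z *\<^sub>R v))^2)"
    proof (cases "z \<in> Is \<times> It")
      case True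
      then have "q + fst z *\<^sub>R u + snd z *\<^sub>R v \<in> A" using sub unfolding Is_def It_def by (cases z) auto
      thus ?thesis using True by (simp add: g_def F_def)
    next
      case False thus ?thesis by (simp add: g_def)
    qed
  qed
  finally show ?thesis unfolding c_def F_def by (simp add: mult.assoc mult_left_mono)
qed



definition lcube :: "real^3 \<Rightarrow> real \<Rightarrow> int^3 \<Rightarrow> (real^3) set" where
  "lcube a h k = cbox (a + h *\<^sub>R (\<chi> i. of_int (k$i))) (a + h *\<^sub>R (\<chi> i. of_int (k$i) + 1))"

lemma mem_lcube: "x \<in> lcube a h k \<longleftrightarrow> (\<forall>i. a$i + h * of_int (k$i) \<le> x$i \<and> x$i \<le> a$i + h * (of_int (k$i) + 1))"
  unfolding lcube_def mem_box_cart by simp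

lemma int_eq_bounds:
  fixes m n :: int and h y b :: real
  assumes h: "h > 0" and "b + h * of_int n < y" "y < b + h * (of_int n + 1)"
    and "b + h * of_int m \<le> y" "y \<le> b + h * (of_int m + 1)"
  shows "m = n"
proof -
  have "h * of_int m < h * (of_int n + 1)" using assms by linarith
  hence "of_int m < (of_int (n + 1)::real)" using h by simp
  hence 1: "m < n + 1" by linarith
  have "h * of_int n < h * (of_int m + 1)" using assms by linarith
  hence "of_int n < (of_int (m + 1)::real)" using h by simp
  hence 2: "n < m + 1" by linarith
  show ?thesis using 1 2 by linarith
qed

lemma lattice_in:
  assumes op: "open \<Omega>" and U: "\<Union>\<T> = closure \<Omega>" and cubes: "\<forall>T\<in>\<T>. \<exists>k. T = lcube a h k"
    and h: "h > 0" and P: "P \<in> \<Omega>" "P \<in> lcube a h k"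
  shows "lcube a h k \<in> \<T>"
proof -
  define lo :: "real^3" where "lo = a + h *\<^sub>R (\<chi> i. of_int (k$i))"
  define hi :: "real^3" where "hi = a + h *\<^sub>R (\<chi> i. of_int (k$i) + 1)"
  define c :: "real^3" where "c = a + h *\<^sub>R (\<chi> i. of_int (k$i) + 1/2)"
  have cb: "c \<in> box lo hi" unfolding mem_box_cart c_def lo_def hi_def using h by simp
  hence "box lo hi \<noteq> {}" by auto
  hence "closure (box lo hi) = cbox lo hi" by simp
  hence Pc: "P \<in> closure (box lo hi)" using P(2) unfolding lcube_def lo_def hi_def by simp
  obtain e where e: "e > 0" "ball P e \<subseteq> \<Omega>" using op P(1) open_contains_ball by blast
  obtain y where y: "y \<in> box lo hi" "dist y P < e" using Pc e(1) unfolding closure_approachable by blast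
  have "y \<in> \<Omega>" using y e by (auto simp: dist_commute)
  hence "y \<in> \<Union>\<T>" using U closure_subset by blast
  then obtain T where T: "T \<in> \<T>" "y \<in> T" by blast
  obtain k' where k': "T = lcube a h k'" using cubes T by blast
  have "k' = k"
  proof (subst vec_eq_iff, intro allI)
    fix i
    have 1: "a$i + h * of_int (k$i) < y$i" "y$i < a$i + h * (of_int (k$i) + 1)"
      using y(1) unfolding mem_box_cart lo_def hi_def by auto
    have 2: "a$i + h * of_int (k'$i) \<le> y$i" "y$i \<le> a$i + h * (of_int (k'$i) + 1)"
      using T(2) unfolding k' mem_lcube by auto
    show "k'$i = k$i" by (rule int_eq_bounds[OF h 1 2])
  qed
  thus ?thesis using T k' by simp
qed

lemma omega_sub:
  assumes cubes: "\<forall>T\<in>\<T>. \<exists>k. T = lcube a h k" and z: "z \<in> omega \<T> (lcube a h k0)"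
  shows "a$i + h * of_int (k0$i) - h \<le> z$i \<and> z$i \<le> a$i + h * (of_int (k0$i) + 1) + h"
proof -
  obtain T' x where T': "T' \<in> \<T>" "z \<in> T'" "x \<in> T'" "x \<in> lcube a h k0"
    using z unfolding omega_def by blast
  obtain k where k: "T' = lcube a h k" using cubes T' by blast
  have 1: "a$i + h * of_int (k$i) \<le> z$i \<and> z$i \<le> a$i + h * (of_int (k$i) + 1)"
    using T'(2) unfolding k mem_lcube by blast
  have 2: "a$i + h * of_int (k$i) \<le> x$i \<and> x$i \<le> a$i + h * (of_int (k$i) + 1)"
    using T'(3) unfolding k mem_lcube by blast
  have 3: "a$i + h * of_int (k0$i) \<le> x$i \<and> x$i \<le> a$i + h * (of_int (k0$i) + 1)"
    using T'(4) unfolding mem_lcube by blast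
  show ?thesis using 1 2 3 by (simp add: distrib_left)
qed

definition ax :: "3 \<Rightarrow> real^3" where "ax i = (\<chi> j. if j = i then 1 else 0)"

lemma edge_pt:
  assumes E: "E \<in> edges (cbox lo hi)" and lh: "\<forall>i. lo$i < hi$i" and P: "P \<in> E"
  shows "\<exists>k. \<forall>j. j \<noteq> k \<longrightarrow> P$j = lo$j \<or> P$j = hi$j"
proof (rule ccontr)
  assume nb: "\<not> ?thesis"
  then obtain i1 where i1: "\<not> (P$i1 = lo$i1 \<or> P$i1 = hi$i1)" by blast
  then obtain i2 where i2: "i2 \<noteq> i1" "\<not> (P$i2 = lo$i2 \<or> P$i2 = hi$i2)" using nb by blast
  have fE: "E face_of cbox lo hi" and adE: "aff_dim E = 1" using E unfolding edges_def by auto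
  have PT: "P \<in> cbox lo hi" using fE P face_of_imp_subset by blast
  hence Pb: "lo$i \<le> P$i \<and> P$i \<le> hi$i" for i unfolding mem_box_cart by auto
  define \<epsilon> where "\<epsilon> = min (min (P$i1 - lo$i1) (hi$i1 - P$i1)) (min (P$i2 - lo$i2) (hi$i2 - P$i2))"
  have ep: "\<epsilon> > 0" unfolding \<epsilon>_def using i1 i2 Pb[of i1] Pb[of i2] by auto
  have eb: "\<epsilon> \<le> P$i1 - lo$i1" "\<epsilon> \<le> hi$i1 - P$i1" "\<epsilon> \<le> P$i2 - lo$i2" "\<epsilon> \<le> hi$i2 - P$i2"
    unfolding \<epsilon>_def by (simp_all add: min_def)
  have inE: "P + \<epsilon> *\<^sub>R ax i \<in> E" if i: "i = i1 \<or> i = i2" for i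
  proof -
    have "lo$i \<le> P$i - \<epsilon> \<and> P$i + \<epsilon> \<le> hi$i" using i eb by auto
    hence m: "P - \<epsilon> *\<^sub>R ax i \<in> cbox lo hi" "P + \<epsilon> *\<^sub>R ax i \<in> cbox lo hi"
      unfolding mem_box_cart ax_def using Pb ep by auto
    have "P = midpoint (P - \<epsilon> *\<^sub>R ax i) (P + \<epsilon> *\<^sub>R ax i)"
      unfolding midpoint_def by (simp add: vec_eq_iff field_simps)
    moreover have "P - \<epsilon> *\<^sub>R ax i \<noteq> P + \<epsilon> *\<^sub>R ax i"
    proof
      assume eq: "P - \<epsilon> *\<^sub>R ax i = P + \<epsilon> *\<^sub>R ax i"
      have c1: "(P - \<epsilon> *\<^sub>R ax i)$i = P$i - \<epsilon>" by (simp add: ax_def)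
      have c2: "(P + \<epsilon> *\<^sub>R ax i)$i = P$i + \<epsilon>" by (simp add: ax_def)
      show False using arg_cong[OF eq, of "\<lambda>x. x$i"] c1 c2 ep by linarith
    qed
    ultimately have "P \<in> open_segment (P - \<epsilon> *\<^sub>R ax i) (P + \<epsilon> *\<^sub>R ax i)" by (metis midpoint_in_open_segment)
    thus ?thesis using fE m P unfolding face_of_def by blast
  qed
  have "collinear E" unfolding collinear_aff_dim using adE by simp
  then obtain w where w: "\<forall>x\<in>E. \<forall>y\<in>E. \<exists>c. x - y = c *\<^sub>R w" unfolding collinear_def by blast
  obtain c1 where c1: "(P + \<epsilon> *\<^sub>R ax i1) - P = c1 *\<^sub>R w" using w inE P by blast
  obtain c2 where c2: "(P + \<epsilon> *\<^sub>R ax i2) - P = c2 *\<^sub>R w" using w inE P by blast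
  have e1: "\<epsilon> = c1 * w$i1" using arg_cong[OF c1, of "\<lambda>x. x$i1"] by (simp add: ax_def)
  have e2: "0 = c1 * w$i2" using arg_cong[OF c1, of "\<lambda>x. x$i2"] i2 by (simp add: ax_def)
  have e3: "\<epsilon> = c2 * w$i2" using arg_cong[OF c2, of "\<lambda>x. x$i2"] by (simp add: ax_def)
  show False using e1 e2 e3 ep by auto
qed

lemma box_omega:
  assumes op: "open \<Omega>" and U: "\<Union>\<T> = closure \<Omega>" and cubes: "\<forall>T\<in>\<T>. \<exists>k. T = lcube a h k"
    and h: "h > 0" and P: "P \<in> \<Omega>" "P \<in> lcube a h k0"
    and bd: "\<forall>j. j \<noteq> k \<longrightarrow> P$j = a$j + h * of_int (k0$j) \<or> P$j = a$j + h * (of_int (k0$j) + 1)"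
    and zb: "\<forall>j. j \<noteq> k \<longrightarrow> \<bar>z$j - P$j\<bar> \<le> h"
    and zk: "a$k + h * of_int (k0$k) \<le> z$k" "z$k \<le> a$k + h * (of_int (k0$k) + 1)"
  shows "z \<in> omega \<T> (lcube a h k0)"
proof -
  define m where "m j = (if P$j = a$j + h * of_int (k0$j) then k0$j else k0$j + 1)" for j
  have Pm: "P$j = a$j + h * of_int (m j)" if "j \<noteq> k" for j
    using bd that unfolding m_def by (auto simp: distrib_left)
  define k' :: "int^3" where "k' = (\<chi> j. if j = k then k0$j else if P$j \<le> z$j then m j else m j - 1)"
  have Pk0: "a$j + h * of_int (k0$j) \<le> P$j \<and> P$j \<le> a$j + h * (of_int (k0$j) + 1)" for j
    using P(2) unfolding mem_lcube by blast
  have "a$j + h * of_int (k'$j) \<le> P$j \<and> P$j \<le> a$j + h * (of_int (k'$j) + 1)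
     \<and> a$j + h * of_int (k'$j) \<le> z$j \<and> z$j \<le> a$j + h * (of_int (k'$j) + 1)" for j
  proof (cases "j = k")
    case True thus ?thesis using Pk0[of j] zk unfolding k'_def by simp
  next
    case False
    have Pj: "P$j = a$j + h * of_int (m j)" using Pm False by blast
    have zj: "\<bar>z$j - P$j\<bar> \<le> h" using zb False by blast
    show ?thesis
    proof (cases "P$j \<le> z$j")
      case True
      hence "k'$j = m j" unfolding k'_def using False by simp
      thus ?thesis using Pj zj True h by (simp add: distrib_left)
    next
      case F2: False
      hence "k'$j = m j - 1" unfolding k'_def using False by simp
      thus ?thesis using Pj zj F2 h by (simp add: distrib_left right_diff_distrib)
    qed
  qed
  hence PK: "P \<in> lcube a h k'" and zK: "z \<in> lcube a h k'" unfolding mem_lcube by auto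
  have "lcube a h k' \<in> \<T>" by (rule lattice_in[OF op U cubes h P(1) PK])
  thus ?thesis unfolding omega_def using PK zK P(2) by blast
qed



lemma absprod: "\<bar>x\<bar> \<le> (A::real) \<Longrightarrow> \<bar>y\<bar> \<le> B \<Longrightarrow> \<bar>x*y\<bar> \<le> A*B"
  by (simp add: abs_mult mult_mono')

lemma abs2: "\<bar>a::real\<bar> \<le> 1 \<Longrightarrow> \<bar>b\<bar> \<le> 1 \<Longrightarrow> \<bar>a+b\<bar> \<le> 2" by arith

lemma comp_bounds:
  fixes uk vk uj vj ds dt h \<sigma> :: real
  assumes u: "\<bar>uk\<bar> \<le> 1" "\<bar>vk\<bar> \<le> 1" "\<bar>uj\<bar> \<le> 1" "\<bar>vj\<bar> \<le> 1"
    and h: "h > 0" and d: "\<bar>ds\<bar> \<le> h/16" "\<bar>dt\<bar> \<le> h/16"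
    and sg: "\<sigma> = 1 \<or> \<sigma> = -1"
  defines "m \<equiv> sqrt (uk^2+vk^2)"
  shows "\<bar>\<sigma>*(h/8)*(uk/m*uj + vk/m* vj) + ds*uj + dt* vj\<bar> \<le> h"
    and "\<sigma> = 1 \<Longrightarrow> 0 \<le> \<sigma>*(h/8)*(uk/m*uk + vk/m* vk) + ds*uk + dt* vk \<and> \<sigma>*(h/8)*(uk/m*uk + vk/m* vk) + ds*uk + dt* vk \<le> h/2"
    and "\<sigma> = -1 \<Longrightarrow> -h/2 \<le> \<sigma>*(h/8)*(uk/m*uk + vk/m* vk) + ds*uk + dt* vk \<and> \<sigma>*(h/8)*(uk/m*uk + vk/m* vk) + ds*uk + dt* vk \<le> 0"
proof -
  have m0: "0 \<le> m" unfolding m_def by simp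
  have muk: "\<bar>uk\<bar> \<le> m" unfolding m_def by (metis add.commute le_add_same_cancel2 real_sqrt_abs real_sqrt_le_mono zero_le_power2)
  have mvk: "\<bar>vk\<bar> \<le> m" unfolding m_def by (metis le_add_same_cancel2 real_sqrt_abs real_sqrt_le_mono zero_le_power2)
  have al: "\<bar>uk/m\<bar> \<le> 1" using muk m0 by (cases "m = 0") (auto simp: abs_divide divide_le_eq)
  have be: "\<bar>vk/m\<bar> \<le> 1" using mvk m0 by (cases "m = 0") (auto simp: abs_divide divide_le_eq)
  have km: "uk/m*uk + vk/m* vk = m"
  proof (cases "m = 0")
    case True
    hence "uk = 0" "vk = 0" using muk mvk by auto
    thus ?thesis using True by simp
  next
    case False
    have "m^2 = uk^2 + vk^2" unfolding m_def by simp
    hence "uk/m*uk + vk/m* vk = m^2/m" by (simp add: power2_eq_square add_divide_distrib)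
    thus ?thesis using False by (simp add: power2_eq_square)
  qed
  have w1: "\<bar>ds*uj\<bar> \<le> h/16" using absprod[OF d(1) u(3)] by simp
  have w2: "\<bar>dt* vj\<bar> \<le> h/16" using absprod[OF d(2) u(4)] by simp
  have w3: "\<bar>uk/m*uj\<bar> \<le> 1" using absprod[OF al u(3)] by simp
  have w4: "\<bar>vk/m* vj\<bar> \<le> 1" using absprod[OF be u(4)] by simp
  have w5: "\<bar>\<sigma>*(h/8)\<bar> = h/8" using sg h by auto
  have w6: "\<bar>\<sigma>*(h/8)*(uk/m*uj + vk/m* vj)\<bar> \<le> h/8 * 2"
  proof -
    have "\<bar>uk/m*uj + vk/m* vj\<bar> \<le> 2" by (rule abs2[OF w3 w4])
    thus ?thesis unfolding abs_mult[of "\<sigma>*(h/8)"] w5 using h by (intro mult_left_mono) auto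
  qed
  show "\<bar>\<sigma>*(h/8)*(uk/m*uj + vk/m* vj) + ds*uj + dt* vj\<bar> \<le> h"
    using w1 w2 w6 h by linarith
  have v1: "\<bar>ds*uk\<bar> \<le> h/16*m" by (rule absprod[OF d(1) muk])
  have v2: "\<bar>dt* vk\<bar> \<le> h/16*m" by (rule absprod[OF d(2) mvk])
  have m2: "m \<le> 2" using muk mvk u(1,2) m0 
  proof -
    have a1: "uk^2 \<le> 1^2" using u(1) by (subst power2_le_iff_abs_le) auto
    have a2: "vk^2 \<le> 1^2" using u(2) by (subst power2_le_iff_abs_le) auto
    have "m^2 \<le> 2^2" unfolding m_def using a1 a2 by simp
    thus ?thesis using m0 power2_le_iff_abs_le[of 2 m] by simp
  qed
  have hm: "h/8*m \<le> h/4" using m2 h by (simp add: field_simps)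
  have hm0: "0 \<le> h*m" using m0 h by simp
  show "\<sigma> = 1 \<Longrightarrow> 0 \<le> \<sigma>*(h/8)*(uk/m*uk + vk/m* vk) + ds*uk + dt* vk \<and> \<sigma>*(h/8)*(uk/m*uk + vk/m* vk) + ds*uk + dt* vk \<le> h/2"
    unfolding km using v1 v2 hm hm0 by (simp add: abs_le_iff) linarith
  show "\<sigma> = -1 \<Longrightarrow> -h/2 \<le> \<sigma>*(h/8)*(uk/m*uk + vk/m* vk) + ds*uk + dt* vk \<and> \<sigma>*(h/8)*(uk/m*uk + vk/m* vk) + ds*uk + dt* vk \<le> 0"
    unfolding km using v1 v2 hm hm0 by (simp add: abs_le_iff) linarith
qed



lemma fin_int:
  fixes p :: "real^3 \<Rightarrow> real"
  assumes bA: "bounded A" and cp: "continuous_on UNIV p"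
    and uv: "u \<bullet> u = 1" "v \<bullet> v = 1" "u \<bullet> v = 0"
  shows "(\<integral>\<^sup>+ z. ennreal (indicator A (q + fst z *\<^sub>R u + snd z *\<^sub>R v) * (p (q + fst z *\<^sub>R u + snd z *\<^sub>R v))^2) \<partial>lborel) < \<infinity>"
proof -
  obtain R where R: "\<forall>x\<in>A. norm x \<le> R" using bA bounded_iff by blast
  have "compact (p ` closure A)"
    by (rule compact_continuous_image) (auto intro: continuous_on_subset[OF cp] simp: compact_closure bA)
  then obtain B where B: "\<forall>y\<in>p ` closure A. norm y \<le> B" using compact_imp_bounded bounded_iff by blast
  have pB: "\<bar>p x\<bar> \<le> B" if "x \<in> A" for x using B that closure_subset by fastforce
  define R' where "R' = R + norm q"
  define Bx where "Bx = {-R'..R'} \<times> {-R'..R'}"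
  have cB: "closed Bx" unfolding Bx_def by (intro closed_Times) auto
  have bB: "bounded Bx" unfolding Bx_def by (intro bounded_Times) auto
  have pt: "ennreal (indicator A (q + fst z *\<^sub>R u + snd z *\<^sub>R v) * (p (q + fst z *\<^sub>R u + snd z *\<^sub>R v))^2)
     \<le> ennreal (B^2) * indicator Bx z" for z :: "real \<times> real"
  proof (cases "q + fst z *\<^sub>R u + snd z *\<^sub>R v \<in> A")
    case True
    define y where "y = q + fst z *\<^sub>R u + snd z *\<^sub>R v"
    have yA: "y \<in> A" using True y_def by simp
    have vu: "v \<bullet> u = 0" using uv(3) by (simp add: inner_commute)
    have s: "fst z = (y - q) \<bullet> u" unfolding y_def using uv vu by (simp add: inner_add_left)
    have t: "snd z = (y - q) \<bullet> v" unfolding y_def using uv vu by (simp add: inner_add_left)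
    have nu: "norm u = 1" using uv(1) by (simp add: norm_eq_sqrt_inner)
    have nv: "norm v = 1" using uv(2) by (simp add: norm_eq_sqrt_inner)
    have ny: "norm (y - q) \<le> R'" unfolding R'_def using R yA norm_triangle_ineq4[of y q] by fastforce
    have "\<bar>fst z\<bar> \<le> R'" unfolding s using Cauchy_Schwarz_ineq2[of "y-q" u] nu ny by simp
    moreover have "\<bar>snd z\<bar> \<le> R'" unfolding t using Cauchy_Schwarz_ineq2[of "y-q" v] nv ny by simp
    ultimately have zB: "z \<in> Bx" unfolding Bx_def by (cases z) (auto simp: abs_le_iff)
    have B0: "0 \<le> B" using pB[OF yA] by linarith
    have "(p y)^2 \<le> B^2" using pB[OF yA] abs_le_square_iff[of "p y" B] B0 by simp
    thus ?thesis using True zB unfolding y_def[symmetric] by (simp add: ennreal_leI)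
  next
    case False thus ?thesis by simp
  qed
  have "(\<integral>\<^sup>+ z. ennreal (indicator A (q + fst z *\<^sub>R u + snd z *\<^sub>R v) * (p (q + fst z *\<^sub>R u + snd z *\<^sub>R v))^2) \<partial>lborel)
     \<le> (\<integral>\<^sup>+ z. ennreal (B^2) * indicator Bx z \<partial>lborel)"
    by (rule nn_integral_mono) (rule pt)
  also have "... = ennreal (B^2) * emeasure lborel Bx"
    by (rule nn_integral_cmult_indicator) (simp add: cB borel_closed)
  also have "... < \<infinity>" using emeasure_bounded_finite[OF bB] by (simp add: ennreal_mult_less_top)
  finally show ?thesis .
qed



lemma tri3: "\<bar>(x1::real)+x2+x3\<bar> \<le> \<bar>x1\<bar>+\<bar>x2\<bar>+\<bar>x3\<bar>"
  by (metis abs_triangle_ineq add_mono_thms_linordered_semiring(3) order_trans)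

lemma abs3: "x' = x - y + e \<Longrightarrow> \<bar>x\<bar> \<le> (A::real) \<Longrightarrow> \<bar>y\<bar> \<le> B \<Longrightarrow> 0 \<le> e \<Longrightarrow> \<bar>x'\<bar> \<le> A + B + e"
  unfolding abs_le_iff by linarith

lemma core:
  fixes \<Omega> :: "(real^3) set"
  assumes op: "open \<Omega>" and mesh: "cartesian_mesh \<Omega> h \<T>" and TT: "T \<in> \<T>"
    and Sc: "S \<subseteq> cut_pts \<Gamma> T" "card S = 3" and G: "\<Gamma> \<subseteq> \<Omega>"
    and tri: "trilinear p"
    and X0: "X0 \<in> omega \<T> T" "X0 \<in> affine hull S"
    and uv: "norm u = 1" "norm v = 1" "u \<bullet> v = 0"
    and pl: "affine hull S = {q + s *\<^sub>R u + t *\<^sub>R v | s t. True}"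
  shows "\<bar>p X0\<bar> \<le> 8 * MK 60 / h * plane_L2_norm (omega \<T> T \<inter> affine hull S) p q u v"
proof -
  have h: "h > 0" and U: "\<Union>\<T> = closure \<Omega>" using mesh unfolding cartesian_mesh_def by auto
  obtain a :: "real^3" where cubes: "\<forall>T\<in>\<T>. \<exists>k. T = lcube a h k"
    using mesh unfolding cartesian_mesh_def lcube_def by blast
  obtain k0 where k0: "T = lcube a h k0" using cubes TT by blast
  have "S \<noteq> {}" using Sc(2) by auto
  then obtain P where PS: "P \<in> S" by blast
  then obtain E where PG: "P \<in> \<Gamma>" and E: "E \<in> edges T" "P \<in> E" using Sc(1) unfolding cut_pts_def by blast
  have PO: "P \<in> \<Omega>" using PG G by blast
  define lo :: "real^3" where "lo = a + h *\<^sub>R (\<chi> i. of_int (k0$i))"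
  define hi :: "real^3" where "hi = a + h *\<^sub>R (\<chi> i. of_int (k0$i) + 1)"
  have Tlh: "T = cbox lo hi" unfolding k0 lcube_def lo_def hi_def ..
  have lh: "\<forall>i. lo$i < hi$i" unfolding lo_def hi_def using h by simp
  obtain k where kk: "\<forall>j. j \<noteq> k \<longrightarrow> P$j = lo$j \<or> P$j = hi$j"
    using edge_pt[OF E(1)[unfolded Tlh] lh E(2)] by blast
  have bd: "\<forall>j. j \<noteq> k \<longrightarrow> P$j = a$j + h * of_int (k0$j) \<or> P$j = a$j + h * (of_int (k0$j) + 1)"
    using kk unfolding lo_def hi_def by simp
  have "E face_of T" using E(1) unfolding edges_def by blast
  hence PT: "P \<in> T" using E(2) face_of_imp_subset by blast
  have PT': "P \<in> lcube a h k0" using PT k0 by simp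
  have PTc: "a$i + h * of_int (k0$i) \<le> P$i \<and> P$i \<le> a$i + h * (of_int (k0$i) + 1)" for i
    using PT' unfolding mem_lcube by blast
  have "P \<in> affine hull S" using PS hull_inc by (metis (no_types, lifting))
  hence "P \<in> {q + s *\<^sub>R u + t *\<^sub>R v | s t. True}" by (simp only: pl)
  then obtain sP tP where Pq: "P = q + sP *\<^sub>R u + tP *\<^sub>R v" by auto
  have "X0 \<in> {q + s *\<^sub>R u + t *\<^sub>R v | s t. True}" using X0(2) by (simp only: pl)
  then obtain s0 t0 where Xq: "X0 = q + s0 *\<^sub>R u + t0 *\<^sub>R v" by auto
  have ub: "\<bar>u$j\<bar> \<le> 1" "\<bar>v$j\<bar> \<le> 1" for j
    using component_le_norm_cart[of u j] component_le_norm_cart[of v j] uv by auto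
  have uu: "u \<bullet> u = 1" and vv: "v \<bullet> v = 1" using uv by (simp_all add: power2_norm_eq_inner[symmetric])
  have vu: "v \<bullet> u = 0" using uv(3) by (simp add: inner_commute)
  define L where "L = a$k + h * of_int (k0$k)"
  define \<sigma> :: real where "\<sigma> = (if P$k - L \<le> h/2 then 1 else -1)"
  define m where "m = sqrt ((u$k)^2 + (v$k)^2)"
  define cs where "cs = sP + \<sigma>*(h/8)*(u$k/m)"
  define ct where "ct = tP + \<sigma>*(h/8)*(v$k/m)"
  define ls where "ls = cs - h/16"
  define lt where "lt = ct - h/16"
  have sg: "\<sigma> = 1 \<or> \<sigma> = -1" unfolding \<sigma>_def by auto
  have sub: "q + s *\<^sub>R u + t *\<^sub>R v \<in> omega \<T> T \<inter> affine hull S"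
    if st: "s \<in> {ls..ls+h/8}" "t \<in> {lt..lt+h/8}" for s t
  proof -
    define z where "z = q + s *\<^sub>R u + t *\<^sub>R v"
    define ds where "ds = s - cs"
    define dt where "dt = t - ct"
    have dsb: "\<bar>ds\<bar> \<le> h/16" and dtb: "\<bar>dt\<bar> \<le> h/16" using st unfolding ds_def dt_def ls_def lt_def abs_le_iff by auto
    have compz: "z$j - P$j = \<sigma>*(h/8)*(u$k/m*u$j + v$k/m* v$j) + ds*u$j + dt* v$j" for j
      unfolding z_def Pq ds_def dt_def cs_def ct_def by (simp add: algebra_simps)
    have zb: "\<forall>j. j \<noteq> k \<longrightarrow> \<bar>z$j - P$j\<bar> \<le> h"
      using comp_bounds(1)[OF ub(1)[of k] ub(2)[of k] ub(1) ub(2) h dsb dtb sg] unfolding compz m_def by blast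
    have zk: "a$k + h * of_int (k0$k) \<le> z$k \<and> z$k \<le> a$k + h * (of_int (k0$k) + 1)"
    proof (cases "P$k - L \<le> h/2")
      case True
      hence "\<sigma> = 1" unfolding \<sigma>_def by simp
      from comp_bounds(2)[OF ub(1)[of k] ub(2)[of k] ub(1)[of k] ub(2)[of k] h dsb dtb sg this]
      have "0 \<le> z$k - P$k \<and> z$k - P$k \<le> h/2" unfolding compz m_def by simp
      thus ?thesis using True PTc[of k] unfolding L_def by (simp add: distrib_left)
    next
      case False
      hence "\<sigma> = -1" unfolding \<sigma>_def by simp
      from comp_bounds(3)[OF ub(1)[of k] ub(2)[of k] ub(1)[of k] ub(2)[of k] h dsb dtb sg this]
      have "-h/2 \<le> z$k - P$k \<and> z$k - P$k \<le> 0" unfolding compz m_def by simp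
      thus ?thesis using False PTc[of k] unfolding L_def by (simp add: distrib_left)
    qed
    have "z \<in> omega \<T> (lcube a h k0)"
      by (rule box_omega[OF op U cubes h PO PT' bd zb]) (use zk in auto)
    moreover have "z \<in> affine hull S" unfolding pl z_def by blast
    ultimately show ?thesis unfolding z_def k0 by blast
  qed
  have X0T: "X0 \<in> omega \<T> (lcube a h k0)" using X0(1) k0 by simp
  have Xb: "\<bar>(X0 - P)$i\<bar> \<le> 2*h" for i
  proof -
    have o: "a$i + h * of_int (k0$i) - h \<le> X0$i \<and> X0$i \<le> a$i + h * (of_int (k0$i) + 1) + h"
      by (rule omega_sub[OF cubes X0T])
    have d: "h * (of_int (k0$i) + 1) = h * of_int (k0$i) + h" by (simp add: distrib_left)
    have "(X0 - P)$i = X0$i - P$i" by simp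
    thus ?thesis unfolding abs_le_iff using o PTc[of i] d by linarith
  qed
  have ip: "\<bar>(X0 - P) \<bullet> w\<bar> \<le> 6*h" if w: "\<And>j. \<bar>w$j\<bar> \<le> 1" for w
  proof -
    have e: "\<bar>(X0 - P)$j * w$j\<bar> \<le> 2*h" for j using absprod[OF Xb w] by simp
    have "(X0 - P) \<bullet> w = (X0 - P)$1 * w$1 + (X0 - P)$2 * w$2 + (X0 - P)$3 * w$3"
      unfolding inner_vec_def sum_3 inner_real_def by simp
    hence "\<bar>(X0 - P) \<bullet> w\<bar> \<le> \<bar>(X0 - P)$1 * w$1\<bar> + \<bar>(X0 - P)$2 * w$2\<bar> + \<bar>(X0 - P)$3 * w$3\<bar>"
      by (simp only: tri3)
    thus ?thesis using e[of 1] e[of 2] e[of 3] by linarith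
  qed
  have s0e: "s0 - sP = (X0 - P) \<bullet> u" unfolding Xq Pq using uu vu
    by (simp add: inner_diff_left inner_add_left algebra_simps)
  have t0e: "t0 - tP = (X0 - P) \<bullet> v" unfolding Xq Pq using vv uv(3)
    by (simp add: inner_diff_left inner_add_left algebra_simps)
  have muk: "\<bar>u$k/m\<bar> \<le> 1" and mvk: "\<bar>v$k/m\<bar> \<le> 1"
  proof -
    have m0: "0 \<le> m" unfolding m_def by simp
    have a1: "\<bar>u$k\<bar> \<le> m" unfolding m_def by (metis add.commute le_add_same_cancel2 real_sqrt_abs real_sqrt_le_mono zero_le_power2)
    have a2: "\<bar>v$k\<bar> \<le> m" unfolding m_def by (metis le_add_same_cancel2 real_sqrt_abs real_sqrt_le_mono zero_le_power2)
    show "\<bar>u$k/m\<bar> \<le> 1" using a1 m0 by (cases "m = 0") (auto simp: abs_divide divide_le_eq)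
    show "\<bar>v$k/m\<bar> \<le> 1" using a2 m0 by (cases "m = 0") (auto simp: abs_divide divide_le_eq)
  qed
  have hs: "\<bar>\<sigma>*(h/8)\<bar> = h/8" using sg h by auto
  have c1: "\<bar>\<sigma>*(h/8)*(u$k/m)\<bar> \<le> h/8" using absprod[OF eq_refl[OF hs] muk] by (simp only: mult_1_right)
  have c2: "\<bar>\<sigma>*(h/8)*(v$k/m)\<bar> \<le> h/8" using absprod[OF eq_refl[OF hs] mvk] by (simp only: mult_1_right)
  have s0b: "\<bar>s0 - ls\<bar> \<le> 60 * (h/8)"
  proof -
    have "s0 - ls = (s0 - sP) - \<sigma>*(h/8)*(u$k/m) + h/16" unfolding ls_def cs_def by simp
    hence "\<bar>s0 - ls\<bar> \<le> 6*h + h/8 + h/16" using ip[OF ub(1)] c1 h unfolding s0e[symmetric] by (intro abs3) auto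
    thus ?thesis using h by simp
  qed
  have t0b: "\<bar>t0 - lt\<bar> \<le> 60 * (h/8)"
  proof -
    have "t0 - lt = (t0 - tP) - \<sigma>*(h/8)*(v$k/m) + h/16" unfolding lt_def ct_def by simp
    hence "\<bar>t0 - lt\<bar> \<le> 6*h + h/8 + h/16" using ip[OF ub(2)] c2 h unfolding t0e[symmetric] by (intro abs3) auto
    thus ?thesis using h by simp
  qed
  have h8: "h/8 > 0" using h by simp
  define A where "A = omega \<T> T \<inter> affine hull S"
  define I2 where "I2 = (\<integral>\<^sup>+ z. ennreal (indicator A (q + fst z *\<^sub>R u + snd z *\<^sub>R v) * (p (q + fst z *\<^sub>R u + snd z *\<^sub>R v))^2) \<partial>lborel)"
  have main: "ennreal ((p X0)^2) \<le> ennreal (MK 60 / (h/8)) * ennreal (MK 60 / (h/8)) * I2"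
    unfolding Xq I2_def by (rule L2[OF tri h8 s0b t0b sub[unfolded A_def[symmetric]]])
  have bA: "bounded A"
  proof -
    have "A \<subseteq> cbox (lo - h *\<^sub>R 1) (hi + h *\<^sub>R 1)"
    proof
      fix z assume "z \<in> A"
      hence "z \<in> omega \<T> (lcube a h k0)" unfolding A_def k0 by blast
      from omega_sub[OF cubes this] show "z \<in> cbox (lo - h *\<^sub>R 1) (hi + h *\<^sub>R 1)"
        unfolding mem_box_cart lo_def hi_def by (simp add: distrib_left)
    qed
    thus ?thesis using bounded_cbox bounded_subset by blast
  qed
  have fin: "I2 < \<infinity>" unfolding I2_def by (rule fin_int[OF bA tri_cont[OF tri] uu vv uv(3)])
  define r where "r = enn2real I2"
  have r0: "0 \<le> r" unfolding r_def by simp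
  have Ir: "I2 = ennreal r" unfolding r_def using fin by simp
  define c where "c = MK 60 / (h/8)"
  have c0: "0 \<le> c" unfolding c_def using MK_pos[of 60] h by simp
  have "ennreal ((p X0)^2) \<le> ennreal (c*c*r)"
    using main unfolding Ir c_def[symmetric] using c0 r0 by (simp add: ennreal_mult')
  hence le: "(p X0)^2 \<le> c*c*r" using c0 r0 by (simp add: ennreal_le_iff)
  have "\<bar>p X0\<bar> = sqrt ((p X0)^2)" by simp
  also have "... \<le> sqrt (c*c*r)" using le by (rule real_sqrt_le_mono)
  also have "... = c * sqrt r" using c0 by (simp add: real_sqrt_mult)
  also have "c = 8 * MK 60 / h" unfolding c_def by simp
  finally show ?thesis unfolding plane_L2_norm_def r_def I2_def A_def .
qed

theorem lemma4p2:
  fixes \<Omega> :: "(real^3) set"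
  assumes "open \<Omega>" and "connected \<Omega>" and "bounded \<Omega>"
    and "\<exists>B. finite B \<and> \<Omega> = interior (\<Union>(a,b)\<in>B. cbox a b)"
  shows "\<exists>C. \<forall>\<Gamma> h \<T>.
     closed_C2_surface \<Gamma> \<and> \<Gamma> \<subseteq> \<Omega> \<and>
     (\<exists>\<Omega>p \<Omega>m. open \<Omega>p \<and> open \<Omega>m \<and> \<Omega>p \<noteq> {} \<and> \<Omega>m \<noteq> {} \<and> \<Omega>p \<inter> \<Omega>m = {} \<and>
        \<Omega> - \<Gamma> = \<Omega>p \<union> \<Omega>m) \<and>
     cartesian_mesh \<Omega> h \<T> \<and> h < reach \<Gamma> / (3 * sqrt 3) \<and>
     (\<forall>T\<in>\<T>. \<forall>E\<in>edges T. \<forall>x y. x \<in> \<Gamma> \<inter> E \<and> y \<in> \<Gamma> \<inter> E \<longrightarrow> x = y) \<and>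
     (\<forall>T\<in>\<T>. \<forall>F\<in>faces T. finite (\<Gamma> \<inter> rel_frontier F) \<and> card (\<Gamma> \<inter> rel_frontier F) \<le> 2) \<and>
     (\<forall>T\<in>\<T>. verts T \<inter> \<Gamma> = {})
     \<longrightarrow> (\<forall>T\<in>\<T>. T \<inter> \<Gamma> \<noteq> {} \<longrightarrow>
           (\<forall>S p X0 q u v. tau_selection \<Gamma> T S \<and> trilinear p \<and>
              X0 \<in> omega \<T> T \<inter> affine hull S \<and>
              norm u = 1 \<and> norm v = 1 \<and> u \<bullet> v = 0 \<and>
              affine hull S = {q + s *\<^sub>R u + t *\<^sub>R v | s t. True}
              \<longrightarrow> \<bar>p X0\<bar> \<le> C / h * plane_L2_norm (omega \<T> T \<inter> affine hull S) p q u v))"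
  apply (intro exI[of _ "8 * MK 60"] allI impI ballI)
  apply (elim conjE IntE)
  apply (rule core[OF assms(1)])
  apply (simp_all add: tau_selection_def)
  done

end
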